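(* Let $G$ be a finite simple graph with $n$ vertices. Then there exists a sequence of distinct vertices $v_1,\dots,v_n$ of $G$ with the following property. Define $G_0:=G$ and $G_k:=G_{k-1}-v_k$ (the graph obtained by deleting the vertex $v_k$ and its incident edges) for $1\le k\le n$. Then $\nu(G_k)=\nu(G)-k$ for all $k<\nu(G)$, and $\nu(G_k)=0$ for all $k\ge \nu(G)$.
   Context: For a finite simple graph $G$ with vertex set $\{v_1,\dots,v_n\}$, the closed adjacency matrix $N(G)$ is the $n\times n$ matrix over $\mathbb{Z}_2$ whose $(i,j)$ entry is $1$ iff $i=j$ or $v_i$ is adjacent to $v_j$. The nullity of $G$ is $\nu(G):=\dim \operatorname{Ker}(N(G))$ over $\mathbb{Z}_2$. By convention, the graph with no vertices $K_0$ has $\nu(K_0)=0$. *)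

theory Defs
  imports Main "HOL.Vector_Spaces" "HOL-Library.Z2" "HOL-Library.Function_Algebras"
begin

text \<open>A finite simple graph is given by a finite vertex set V and a symmetric,
irreflexive adjacency relation E (only its restriction to V matters).\<close>

definition simple_graph :: "'a set \<Rightarrow> ('a \<Rightarrow> 'a \<Rightarrow> bool) \<Rightarrow> bool" where
  "simple_graph V E \<longleftrightarrow> finite V \<and> (\<forall>u v. E u v \<longrightarrow> E v u) \<and> (\<forall>v. \<not> E v v)"

definition closed_adj :: "('a \<Rightarrow> 'a \<Rightarrow> bool) \<Rightarrow> 'a \<Rightarrow> 'a \<Rightarrow> bit" where
  "closed_adj E u v = (if u = v \<or> E u v then 1 else 0)"

text \<open>Vectors in Z2^V are functions 'a => bit vanishing outside V; the kernel of N(G).\<close>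
definition closed_kernel :: "'a set \<Rightarrow> ('a \<Rightarrow> 'a \<Rightarrow> bool) \<Rightarrow> ('a \<Rightarrow> bit) set" where
  "closed_kernel V E = {x. (\<forall>v. v \<notin> V \<longrightarrow> x v = 0) \<and>
                            (\<forall>u\<in>V. (\<Sum>v\<in>V. closed_adj E u v * x v) = 0)}"

definition nullity :: "'a set \<Rightarrow> ('a \<Rightarrow> 'a \<Rightarrow> bool) \<Rightarrow> nat" where
  "nullity V E = vector_space.dim (\<lambda>(c::bit) (x::'a \<Rightarrow> bit). (\<lambda>v. c * x v)) (closed_kernel V E)"

definition del_vertices :: "'a set \<Rightarrow> ('a \<Rightarrow> 'a \<Rightarrow> bool) \<Rightarrow> 'a set \<Rightarrow> 'a set \<times> ('a \<Rightarrow> 'a \<Rightarrow> bool)" where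
  "del_vertices V E S = (V - S, \<lambda>u v. E u v \<and> u \<notin> S \<and> v \<notin> S)"

end

theory Submission imports Defs begin

declare add_bit_eq_xor[simp del] mult_bit_eq_and[simp del]

interpretation Z: vector_space "\<lambda>(c::bit) (x::'a \<Rightarrow> bit). (\<lambda>v. c * x v)"
  by unfold_locales (auto simp: fun_eq_iff algebra_simps)

lemma bit_cases': "(b::bit) = 0 \<or> b = 1" by (cases b) auto

lemma bit_add_self: "(b::bit) + b = 0"
  by (cases b) (auto simp flip: one_add_one)

lemma ck_finite: "finite V \<Longrightarrow> finite (closed_kernel V E)"
proof -
  assume "finite V"
  have "closed_kernel V E \<subseteq> {f. \<forall>x. (x \<in> V \<longrightarrow> f x \<in> {0,1}) \<and> (x \<notin> V \<longrightarrow> f x = 0)}"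
    using bit_cases' by (auto simp: closed_kernel_def)
  then show ?thesis using finite_subset finite_set_of_finite_funs[OF \<open>finite V\<close>, of "{0,1}" 0] by blast
qed

lemma dim_zero_iff:
  fixes K :: "('a \<Rightarrow> bit) set"
  assumes "finite K"
  shows "Z.dim K = 0 \<longleftrightarrow> K \<subseteq> {0}"
proof
  assume "Z.dim K = 0"
  obtain B where B: "B \<subseteq> K" "Z.independent B" "K \<subseteq> Z.span B" "card B = Z.dim K"
    by (rule Z.basis_exists)
  then have "B = {}" using assms \<open>Z.dim K = 0\<close> finite_subset by fastforce
  with B show "K \<subseteq> {0}" by simp
next
  assume "K \<subseteq> {0}"
  show "Z.dim K = 0"
  proof (rule Z.dim_unique[of "{}"])
    show "K \<subseteq> Z.span {}" using \<open>K \<subseteq> {0}\<close> by (simp only: Z.span_empty)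
    show "Z.independent {}" by (rule Z.independent_empty)
    show "{} \<subseteq> K" by (rule empty_subsetI)
    show "card {} = 0" by (rule card.empty)
  qed
qed

lemma dim_drop:
  fixes K :: "('a \<Rightarrow> bit) set"
  assumes fin: "finite K" and x: "x \<in> K" "x v = 1"
    and sub: "\<And>z. z \<in> K \<Longrightarrow> (\<lambda>t. z t - z v * x t) \<in> K"
  shows "Z.dim K = Z.dim {z\<in>K. z v = 0} + 1"
proof -
  let ?K' = "{z\<in>K. z v = 0}"
  obtain B where B: "B \<subseteq> ?K'" "Z.independent B" "?K' \<subseteq> Z.span B" "card B = Z.dim ?K'"
    by (rule Z.basis_exists)
  have finB: "finite B" using fin by (intro finite_subset[OF B(1)]) simp
  have Zsub: "Z.subspace {z::'a\<Rightarrow>bit. z v = 0}"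
    unfolding Z.subspace_def by (simp add: ring_distribs)
  have spanB: "Z.span B \<subseteq> {z. z v = 0}"
  proof -
    have "B \<subseteq> {z. z v = 0}" using B(1) by blast
    then show ?thesis by (rule Z.span_minimal[OF _ Zsub])
  qed
  have xnot: "x \<notin> Z.span B" using spanB x by auto
  have xB: "x \<notin> B" using xnot Z.span_base by blast
  show ?thesis
  proof (rule Z.dim_unique[of "insert x B"])
    show "insert x B \<subseteq> K" using B x by auto
    show "K \<subseteq> Z.span (insert x B)"
    proof
      fix z assume z: "z \<in> K"
      have "(\<lambda>t. z t - z v * x t) \<in> ?K'" using sub[OF z] x by simp
      then have "(\<lambda>t. z t - z v * x t) \<in> Z.span B" using B by blast
      moreover have "(\<lambda>t. z t - z v * x t) = z - (\<lambda>t. z v * x t)" by (simp only: fun_diff_def)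
      ultimately have "z - (\<lambda>t. z v * x t) \<in> Z.span B" by simp
      then show "z \<in> Z.span (insert x B)" unfolding Z.span_breakdown_eq by blast
    qed
    show "Z.independent (insert x B)" using Z.independent_insertI[OF xnot B(2)] .
    show "card (insert x B) = Z.dim ?K' + 1" using finB xB B(4) by simp
  qed
qed

lemma bit_one_one: "(1::bit) + 1 = 0"
  by (simp only: one_add_one bit_2_eq_0)
lemma A: "(a::bit) + 0 = a" by simp
lemma bit_cancel: "(a::bit) + b + (b + c) = a + c"
  apply (cases a; cases b; cases c) 
  apply (simp_all only: bit_one_one add_0 add_0_right) 
  done
lemma sym_sum:
  fixes f :: "'a \<Rightarrow> 'a \<Rightarrow> bit"
  assumes "finite F" "\<forall>a\<in>F. \<forall>b\<in>F. f a b = f b a"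
  shows "(\<Sum>a\<in>F. \<Sum>b\<in>F. f a b) = (\<Sum>a\<in>F. f a a)"
  using assms
proof (induction F rule: finite_induct)
  case empty
  then show ?case by simp
next
  case (insert a F)
  have s: "(\<Sum>b\<in>F. f b a) = (\<Sum>b\<in>F. f a b)"
    using insert.prems by (intro sum.cong) blast+
  have ih: "(\<Sum>x\<in>F. \<Sum>y\<in>F. f x y) = (\<Sum>x\<in>F. f x x)"
    using insert.prems by (intro insert.IH) blast+
  have "(\<Sum>x\<in>insert a F. \<Sum>y\<in>insert a F. f x y)
      = (f a a + (\<Sum>b\<in>F. f b a)) + ((\<Sum>b\<in>F. f a b) + (\<Sum>x\<in>F. \<Sum>y\<in>F. f x y))"
    by (simp only: sum.insert[OF insert.hyps] sum.distrib)
  also have "\<dots> = f a a + (\<Sum>x\<in>F. \<Sum>y\<in>F. f x y)"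
    unfolding s by (rule bit_cancel)
  also have "\<dots> = (\<Sum>x\<in>insert a F. f x x)"
    by (simp only: ih sum.insert[OF insert.hyps])
  finally show ?case .
qed


definition Av :: "'a set \<Rightarrow> ('a \<Rightarrow> 'a \<Rightarrow> bool) \<Rightarrow> ('a \<Rightarrow> bit) \<Rightarrow> 'a \<Rightarrow> bit" where
  "Av V E y u = (\<Sum>w\<in>V. closed_adj E u w * y w)"

lemma ck_def': "closed_kernel V E = {x. (\<forall>v. v \<notin> V \<longrightarrow> x v = 0) \<and> (\<forall>u\<in>V. Av V E x u = 0)}"
  by (simp add: closed_kernel_def Av_def)

lemma closed_adj_sym: "\<forall>u v. E u v \<longrightarrow> E v u \<Longrightarrow> closed_adj E u v = closed_adj E v u"
  unfolding closed_adj_def by auto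

lemma Av_swap:
  assumes sym: "\<forall>u v. E u v \<longrightarrow> E v u"
  shows "(\<Sum>s\<in>V. a s * Av V E b s) = (\<Sum>t\<in>V. b t * Av V E a t)"
proof -
  have cs: "\<And>s t. closed_adj E s t = closed_adj E t s" using closed_adj_sym[OF sym] by blast
  have "(\<Sum>s\<in>V. a s * Av V E b s) = (\<Sum>s\<in>V. \<Sum>t\<in>V. a s * closed_adj E s t * b t)"
    by (simp add: Av_def sum_distrib_left mult.assoc)
  also have "\<dots> = (\<Sum>t\<in>V. \<Sum>s\<in>V. a s * closed_adj E s t * b t)" by (rule sum.swap)
  also have "\<dots> = (\<Sum>t\<in>V. \<Sum>s\<in>V. b t * (closed_adj E t s * a s))"
  proof (intro sum.cong refl)
    fix t s
    show "a s * closed_adj E s t * b t = b t * (closed_adj E t s * a s)"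
      by (simp only: cs[of s t] mult_ac)
  qed
  also have "\<dots> = (\<Sum>t\<in>V. b t * Av V E a t)" by (simp add: Av_def sum_distrib_left)
  finally show ?thesis .
qed

lemma Av_lin: "Av V E (\<lambda>t. z t + c * x t) u = Av V E z u + c * Av V E x u"
  by (simp add: Av_def sum.distrib sum_distrib_left algebra_simps)

lemma Av_diff: "Av V E (\<lambda>t. z t + x t) u = Av V E z u + Av V E x u"
  by (simp add: Av_def sum.distrib algebra_simps)

lemma Av_remove:
  assumes fin: "finite V" and v: "v \<in> V" and yv: "y v = 0"
  shows "Av (V - {v}) E y u = Av V E y u"
  unfolding Av_def using sum.remove[OF fin v, of "\<lambda>w. closed_adj E u w * y w"] yv by simp

lemma kernel_del:
  assumes sym: "\<forall>u v. E u v \<longrightarrow> E v u" and fin: "finite V" and v: "v \<in> V"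
    and x: "x \<in> closed_kernel V E" and xv: "x v = 1"
  shows "closed_kernel (V - {v}) E = {z \<in> closed_kernel V E. z v = 0}"
proof (intro equalityI subsetI)
  fix y assume y: "y \<in> closed_kernel (V - {v}) E"
  have yv: "y v = 0" and ysup: "\<And>t. t \<notin> V \<Longrightarrow> y t = 0"
    and yk: "\<And>u. u \<in> V - {v} \<Longrightarrow> Av (V - {v}) E y u = 0"
    using y by (auto simp: ck_def')
  have yk2: "\<And>u. u \<in> V \<Longrightarrow> u \<noteq> v \<Longrightarrow> Av V E y u = 0"
    using yk Av_remove[of V v y, OF fin v yv] by auto
  have "(\<Sum>s\<in>V. x s * Av V E y s) = x v * Av V E y v + (\<Sum>s\<in>V - {v}. x s * Av V E y s)"
    by (rule sum.remove[OF fin v])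
  also have "(\<Sum>s\<in>V - {v}. x s * Av V E y s) = 0" using yk2 by (intro sum.neutral) auto
  finally have e1: "(\<Sum>s\<in>V. x s * Av V E y s) = Av V E y v" using xv by simp
  have e2: "(\<Sum>s\<in>V. x s * Av V E y s) = (\<Sum>t\<in>V. y t * Av V E x t)" by (rule Av_swap[OF sym])
  have e3: "(\<Sum>t\<in>V. y t * Av V E x t) = 0" using x by (intro sum.neutral) (auto simp: ck_def')
  have "Av V E y v = 0" using e1 e2 e3 by simp
  with yk2 ysup yv show "y \<in> {z \<in> closed_kernel V E. z v = 0}" by (auto simp: ck_def')
next
  fix z assume "z \<in> {z \<in> closed_kernel V E. z v = 0}"
  then have zv: "z v = 0" and zk: "z \<in> closed_kernel V E" by auto
  then show "z \<in> closed_kernel (V - {v}) E" using Av_remove[of V v z, OF fin v zv] by (auto simp: ck_def')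
qed

lemma nullity_drop:
  assumes sym: "\<forall>u v. E u v \<longrightarrow> E v u" and fin: "finite V" and v: "v \<in> V"
    and x: "x \<in> closed_kernel V E" and xv: "x v = 1"
  shows "nullity V E = nullity (V - {v}) E + 1"
proof -
  have sub: "(\<lambda>t. z t - z v * x t) \<in> closed_kernel V E" if z: "z \<in> closed_kernel V E" for z
    using z x by (auto simp: ck_def' Av_lin)
  show ?thesis
    unfolding nullity_def kernel_del[OF sym fin v x xv]
    by (rule dim_drop[OF ck_finite[OF fin] x xv sub])
qed


lemma bit_plus_one_zero: "(a::bit) + 1 = 0 \<Longrightarrow> a = 1"
  by (cases a) (simp_all add: bit_one_one)

lemma key2:
  assumes sym: "\<forall>u v. E u v \<longrightarrow> E v u" and fin: "finite V"
    and K0: "closed_kernel V E \<subseteq> {0}" and ne: "V \<noteq> {}"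
  shows "\<exists>v\<in>V. closed_kernel (V - {v}) E \<subseteq> {0}"
proof (rule ccontr)
  assume "\<not> ?thesis"
  then have "\<forall>v\<in>V. \<exists>y. y \<in> closed_kernel (V - {v}) E \<and> y \<noteq> 0" by blast
  then obtain w where w: "\<And>v. v \<in> V \<Longrightarrow> w v \<in> closed_kernel (V - {v}) E \<and> w v \<noteq> 0"
    by metis
  have wvv: "\<And>v. v \<in> V \<Longrightarrow> w v v = 0" using w by (auto simp: ck_def')
  have wsup: "\<And>v t. v \<in> V \<Longrightarrow> t \<notin> V \<Longrightarrow> w v t = 0" using w by (auto simp: ck_def')
  have Aw: "Av V E (w v) u = (if u = v then 1 else 0)" if v: "v \<in> V" and u: "u \<in> V" for v u
  proof -
    have off: "Av V E (w v) u' = 0" if "u' \<in> V" "u' \<noteq> v" for u'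
      using w[OF v] Av_remove[of V v "w v", OF fin v wvv[OF v]] that by (auto simp: ck_def')
    show ?thesis
    proof (cases "u = v")
      case False then show ?thesis using off u by simp
    next
      case True
      show ?thesis
      proof (rule ccontr)
        assume "Av V E (w v) u \<noteq> (if u = v then 1 else 0)"
        then have a0: "Av V E (w v) v = 0" using True by simp
        have "w v \<in> closed_kernel V E"
          unfolding ck_def' using off wsup[OF v] a0 by auto
        then have "w v = 0" using K0 by auto
        then show False using w[OF v] by simp
      qed
    qed
  qed
  have wsym: "w u v = w v u" if u: "u \<in> V" and v: "v \<in> V" for u v
  proof -
    have "(\<Sum>s\<in>V. w u s * Av V E (w v) s) = (\<Sum>s\<in>V. if s = v then w u s else 0)"
      by (rule sum.cong) (auto simp: Aw[OF v])
    also have "\<dots> = w u v" using fin v by simp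
    finally have 1: "(\<Sum>s\<in>V. w u s * Av V E (w v) s) = w u v" .
    have "(\<Sum>s\<in>V. w v s * Av V E (w u) s) = (\<Sum>s\<in>V. if s = u then w v s else 0)"
      by (rule sum.cong) (auto simp: Aw[OF u])
    also have "\<dots> = w v u" using fin u by simp
    finally have 2: "(\<Sum>s\<in>V. w v s * Av V E (w u) s) = w v u" .
    show ?thesis using 1 2 Av_swap[OF sym, where V=V and a="w u" and b="w v"] by simp
  qed
  obtain u0 where u0: "u0 \<in> V" using ne by blast
  define z where "z t = closed_adj E t u0" for t
  define s where "s t = (\<Sum>v\<in>V. z v * w v t)" for t
  have As: "Av V E s u = z u" if u: "u \<in> V" for u
  proof -
    have "Av V E s u = (\<Sum>t\<in>V. \<Sum>v\<in>V. z v * (closed_adj E u t * w v t))"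
      by (simp add: Av_def s_def sum_distrib_left mult_ac)
    also have "\<dots> = (\<Sum>v\<in>V. \<Sum>t\<in>V. z v * (closed_adj E u t * w v t))" by (rule sum.swap)
    also have "\<dots> = (\<Sum>v\<in>V. z v * Av V E (w v) u)" by (simp add: Av_def sum_distrib_left)
    also have "\<dots> = (\<Sum>v\<in>V. if v = u then z v else 0)"
      by (rule sum.cong) (auto simp: Aw[OF _ u])
    also have "\<dots> = z u" using fin u by simp
    finally show ?thesis .
  qed
  define e where "e t = (if t = u0 then (1::bit) else 0)" for t
  have Ae: "Av V E e u = z u" if u: "u \<in> V" for u
  proof -
    have "Av V E e u = (\<Sum>t\<in>V. if t = u0 then closed_adj E u t else 0)"
      unfolding Av_def e_def by (rule sum.cong) auto
    also have "\<dots> = z u" using fin u0 by (simp add: z_def)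
    finally show ?thesis .
  qed
  have ssup: "s t = 0" if "t \<notin> V" for t
    unfolding s_def using wsup that by (intro sum.neutral) auto
  have "(\<lambda>t. s t + e t) \<in> closed_kernel V E"
  proof -
    have "\<forall>u\<in>V. Av V E (\<lambda>t. s t + e t) u = 0"
      using As Ae by (simp add: Av_diff bit_add_self)
    moreover have "\<forall>t. t \<notin> V \<longrightarrow> s t + e t = 0"
      using ssup u0 by (auto simp: e_def)
    ultimately show ?thesis unfolding ck_def' by blast
  qed
  then have d0: "\<And>t. s t + e t = 0" using K0 by (auto simp: fun_eq_iff)
  have su0: "s u0 = 1" using d0[of u0] by (simp add: e_def bit_plus_one_zero)
  have sot: "s t = 0" if "t \<noteq> u0" for t using d0[of t] that by (simp add: e_def)
  have "(\<Sum>t\<in>V. z t * s t) = (\<Sum>t\<in>V. if t = u0 then z t else 0)"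
    by (rule sum.cong) (auto simp: su0 sot)
  also have "\<dots> = 1" using fin u0 by (simp add: z_def closed_adj_def)
  finally have one: "(\<Sum>t\<in>V. z t * s t) = 1" .
  have "(\<Sum>t\<in>V. z t * s t) = (\<Sum>t\<in>V. \<Sum>v\<in>V. z t * z v * w v t)"
    by (simp add: s_def sum_distrib_left mult_ac)
  also have "\<dots> = (\<Sum>t\<in>V. z t * z t * w t t)"
  proof (rule sym_sum[OF fin])
    show "\<forall>a\<in>V. \<forall>b\<in>V. z a * z b * w b a = z b * z a * w a b"
    proof (intro ballI)
      fix a b assume "a \<in> V" "b \<in> V"
      then have "w b a = w a b" by (intro wsym)
      then show "z a * z b * w b a = z b * z a * w a b" by (simp add: mult_ac)
    qed
  qed
  also have "\<dots> = 0" using wvv by (intro sum.neutral) auto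
  finally show False using one by simp
qed

lemma nullity_zero:
  assumes "finite V" "closed_kernel V E \<subseteq> {0}"
  shows "nullity V E = 0"
  unfolding nullity_def using assms ck_finite dim_zero_iff by blast

lemma nullity_zero_iff:
  assumes "finite V"
  shows "nullity V E = 0 \<longleftrightarrow> closed_kernel V E \<subseteq> {0}"
  unfolding nullity_def using assms ck_finite dim_zero_iff by blast


lemma del_eq:
  "nullity (fst (del_vertices V E S)) (snd (del_vertices V E S)) = nullity (V - S) E"
proof -
  have "closed_kernel (V - S) (\<lambda>u v. E u v \<and> u \<notin> S \<and> v \<notin> S) = closed_kernel (V - S) E"
  proof -
    have "(\<Sum>w\<in>V - S. closed_adj (\<lambda>u v. E u v \<and> u \<notin> S \<and> v \<notin> S) u w * x w)
        = (\<Sum>w\<in>V - S. closed_adj E u w * x w)" if "u \<in> V - S" for u x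
      by (rule sum.cong) (use that in \<open>auto simp: closed_adj_def\<close>)
    then show ?thesis unfolding closed_kernel_def by auto
  qed
  then show ?thesis by (simp add: del_vertices_def nullity_def)
qed

lemma main:
  assumes sym: "\<forall>u v. E u v \<longrightarrow> E v u"
  shows "finite V \<Longrightarrow> \<exists>vs. distinct vs \<and> set vs = V \<and>
     (\<forall>k. k < nullity V E \<longrightarrow> nullity (V - set (take k vs)) E = nullity V E - k) \<and>
     (\<forall>k. nullity V E \<le> k \<longrightarrow> nullity (V - set (take k vs)) E = 0)"
proof (induction V rule: finite_psubset_induct)
  case (psubset V)
  show ?case
  proof (cases "V = {}")
    case True
    have n0: "nullity {} E = 0"
      by (rule nullity_zero) (auto simp: ck_def' fun_eq_iff)
    show ?thesis by (rule exI[of _ "[]"]) (simp add: True n0)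
  next
    case False
    have "\<exists>v\<in>V. nullity (V - {v}) E = nullity V E - 1 \<and> (0 < nullity V E \<longrightarrow> nullity V E = nullity (V - {v}) E + 1)"
    proof (cases "nullity V E = 0")
      case True
      have "closed_kernel V E \<subseteq> {0}" using nullity_zero_iff[OF psubset.hyps, of E] True by simp
      then obtain v where v: "v \<in> V" "closed_kernel (V - {v}) E \<subseteq> {0}"
        using key2[OF sym psubset.hyps _ False] by blast
      have "nullity (V - {v}) E = 0" by (rule nullity_zero) (use psubset.hyps v in auto)
      then show ?thesis using v True by auto
    next
      case nz: False
      have "\<not> closed_kernel V E \<subseteq> {0}" using nullity_zero_iff[OF psubset.hyps, of E] nz by simp
      then obtain x where x: "x \<in> closed_kernel V E" "x \<noteq> 0" by blast
      then obtain v where xv: "x v \<noteq> 0" by (auto simp: fun_eq_iff)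
      then have xv1: "x v = 1" by simp
      have v: "v \<in> V" using x(1) xv by (auto simp: ck_def')
      have "nullity V E = nullity (V - {v}) E + 1"
        by (rule nullity_drop[OF sym psubset.hyps v x(1) xv1])
      then show ?thesis using v by auto
    qed
    then obtain v where v: "v \<in> V" and nvc: "nullity (V - {v}) E = nullity V E - 1 \<and>
         (0 < nullity V E \<longrightarrow> nullity V E = nullity (V - {v}) E + 1)" ..
    have nv: "nullity (V - {v}) E = nullity V E - 1" using nvc by (rule conjunct1)
    have nv2: "0 < nullity V E \<Longrightarrow> nullity V E = nullity (V - {v}) E + 1"
      using nvc by (intro mp[OF conjunct2[OF nvc]])
    have sub: "V - {v} \<subset> V" using v by blast
    from psubset.IH[OF sub] obtain vs where vsc: "distinct vs \<and> set vs = V - {v} \<and>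
      (\<forall>k. k < nullity (V - {v}) E \<longrightarrow> nullity (V - {v} - set (take k vs)) E = nullity (V - {v}) E - k) \<and>
      (\<forall>k. nullity (V - {v}) E \<le> k \<longrightarrow> nullity (V - {v} - set (take k vs)) E = 0)" ..
    note vs = conjunct1[OF vsc] conjunct1[OF conjunct2[OF vsc]]
      conjunct1[OF conjunct2[OF conjunct2[OF vsc]]] conjunct2[OF conjunct2[OF conjunct2[OF vsc]]]
    have tk: "V - set (take (Suc j) (v # vs)) = V - {v} - set (take j vs)" for j
      by auto
    show ?thesis
    proof (rule exI[of _ "v # vs"], intro conjI allI impI)
      show "distinct (v # vs)" using vs by auto
      show "set (v # vs) = V" using vs v by auto
    next
      fix k assume k: "k < nullity V E"
      show "nullity (V - set (take k (v # vs))) E = nullity V E - k"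
      proof (cases k)
        case 0 then show ?thesis by simp
      next
        case (Suc j)
        have "nullity V E = nullity (V - {v}) E + 1" using nv2 k by simp
        then show ?thesis using vs(3) k Suc tk by simp
      qed
    next
      fix k assume k: "nullity V E \<le> k"
      show "nullity (V - set (take k (v # vs))) E = 0"
      proof (cases k)
        case 0 then show ?thesis using k by simp
      next
        case (Suc j)
        have "nullity (V - {v}) E \<le> j" using nv k Suc by simp
        then show ?thesis using vs(4) Suc tk by simp
      qed
    qed
  qed
qed

theorem theorem2p8:
  fixes V :: "'a set" and E :: "'a \<Rightarrow> 'a \<Rightarrow> bool"
  assumes "simple_graph V E"
  shows "\<exists>vs. distinct vs \<and> set vs = V \<and> length vs = card V \<and>
           (\<forall>k. k < nullity V E \<longrightarrow>
              nullity (fst (del_vertices V E (set (take k vs)))) (snd (del_vertices V E (set (take k vs))))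
                = nullity V E - k) \<and>
           (\<forall>k. nullity V E \<le> k \<and> k \<le> card V \<longrightarrow>
              nullity (fst (del_vertices V E (set (take k vs)))) (snd (del_vertices V E (set (take k vs)))) = 0)"
proof -
  have fin: "finite V" and sym: "\<forall>u v. E u v \<longrightarrow> E v u"
    using assms by (auto simp: simple_graph_def)
  obtain vs where vs: "distinct vs" "set vs = V"
     "\<forall>k. k < nullity V E \<longrightarrow> nullity (V - set (take k vs)) E = nullity V E - k"
     "\<forall>k. nullity V E \<le> k \<longrightarrow> nullity (V - set (take k vs)) E = 0"
    using main[OF sym fin] by blast
  have len: "length vs = card V" using vs distinct_card by metis
  show ?thesis unfolding del_eq using vs len by (intro exI[of _ vs]) auto
qed

end
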